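(* Let $n\ge2$ and let $\lambda_1,\dots,\lambda_n$ be real numbers with $\lambda_i\ne\lambda_j$ for $i\neq j$. Let $\sigma:\{1,\dots,n\}\to\{1,\dots,n\}$ be a permutation different from the identity, and let $M$ be the $n\times n$ matrix with entries $$M_{ij}=\lambda_j^{\,i}-\lambda_{\sigma(j)}^{\,i},\qquad 1\le i,j\le n.$$ If $v=(v_1,\dots,v_n)\in\mathbb{R}^n$ satisfies $Mv^T=0$, then there are two indices $i\neq j$ such that $v_i=v_j$. *)

theory Defs
  imports Complex_Main "HOL-Combinatorics.Permutations"
begin

definition Mmat :: "(nat \<Rightarrow> real) \<Rightarrow> (nat \<Rightarrow> nat) \<Rightarrow> nat \<Rightarrow> nat \<Rightarrow> real" where
  "Mmat lam \<sigma> i j = lam j ^ i - lam (\<sigma> j) ^ i"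

end

theory Submission
  imports Defs "HOL-Computational_Algebra.Polynomial"
begin

lemma poly_sum_upto:
  fixes p :: "real poly"
  assumes "degree p \<le> N"
  shows "poly p x = (\<Sum>i\<le>N. coeff p i * x ^ i)"
proof -
  have "poly p x = (\<Sum>i\<le>degree p. coeff p i * x ^ i)" by (rule poly_altdef)
  also have "\<dots> = (\<Sum>i\<le>N. coeff p i * x ^ i)"
    by (rule sum.mono_neutral_left) (use assms in \<open>auto simp: coeff_eq_0 le_degree\<close>)
  finally show ?thesis .
qed

lemma key:
  fixes S :: "nat set" and lam w :: "nat \<Rightarrow> real"
  assumes fin: "finite S" and inj: "inj_on lam S" and k: "k \<in> S" and nz: "lam k \<noteq> 0"
    and eq: "\<And>i. i \<in> {1..card S} \<Longrightarrow> (\<Sum>m\<in>S. lam m ^ i * w m) = 0"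
  shows "w k = 0"
proof -
  define q where "q = (\<Prod>m\<in>S-{k}. [:-lam m, 1:])"
  define p where "p = pCons 0 q"
  have "degree q \<le> (\<Sum>m\<in>S-{k}. (degree \<circ> (\<lambda>m. [:-lam m, 1:])) m)"
    unfolding q_def using fin by (intro degree_prod_sum_le) auto
  also have "\<dots> = card (S - {k})" by simp
  finally have dq: "degree q \<le> card S - 1" using fin k by simp
  have cS: "card S \<ge> 1" using fin k by (metis One_nat_def Suc_leI card_gt_0_iff empty_iff)
  have dp: "degree p \<le> card S" unfolding p_def
    using degree_pCons_le[of 0 q] dq cS by linarith
  have polyp: "poly p x = (\<Sum>i=1..card S. coeff p i * x ^ i)" for x
  proof -
    have "poly p x = (\<Sum>i\<le>card S. coeff p i * x ^ i)" by (rule poly_sum_upto[OF dp])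
    also have "\<dots> = coeff p 0 * x ^ 0 + (\<Sum>i=1..card S. coeff p i * x ^ i)"
      unfolding atMost_atLeast0 using sum.atLeast_Suc_atMost[of 0 "card S" "\<lambda>i. coeff p i * x^i"] by simp
    also have "coeff p 0 = 0" unfolding p_def by simp
    finally show ?thesis by simp
  qed
  have "(\<Sum>m\<in>S. poly p (lam m) * w m) = (\<Sum>m\<in>S. \<Sum>i=1..card S. coeff p i * (lam m ^ i * w m))"
    by (simp add: polyp sum_distrib_right mult.assoc)
  also have "\<dots> = (\<Sum>i=1..card S. coeff p i * (\<Sum>m\<in>S. lam m ^ i * w m))"
    by (subst sum.swap) (simp add: sum_distrib_left)
  also have "\<dots> = 0" using eq by simp
  finally have s0: "(\<Sum>m\<in>S. poly p (lam m) * w m) = 0" .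
  have zero: "poly p (lam m) = 0" if "m \<in> S - {k}" for m
  proof -
    have "poly q (lam m) = (\<Prod>m'\<in>S-{k}. lam m - lam m')" unfolding q_def by (simp add: poly_prod)
    also have "\<dots> = 0" using that fin by (intro prod_zero) auto
    finally show ?thesis unfolding p_def by simp
  qed
  have "(\<Sum>m\<in>S. poly p (lam m) * w m) = poly p (lam k) * w k + (\<Sum>m\<in>S-{k}. poly p (lam m) * w m)"
    using fin k by (simp add: sum.remove)
  also have "(\<Sum>m\<in>S-{k}. poly p (lam m) * w m) = 0" using zero by simp
  finally have "poly p (lam k) * w k = 0" using s0 by simp
  moreover have "poly p (lam k) \<noteq> 0"
  proof -
    have "poly q (lam k) = (\<Prod>m'\<in>S-{k}. lam k - lam m')" unfolding q_def by (simp add: poly_prod)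
    also have "\<dots> \<noteq> 0" using fin inj k by (auto simp: inj_on_def)
    finally show ?thesis unfolding p_def using nz by simp
  qed
  ultimately show ?thesis by simp
qed

theorem lemma5p2:
  fixes n :: nat and lam :: "nat \<Rightarrow> real" and \<sigma> :: "nat \<Rightarrow> nat" and v :: "nat \<Rightarrow> real"
  assumes "n \<ge> 2"
    and "\<And>i j. i \<in> {1..n} \<Longrightarrow> j \<in> {1..n} \<Longrightarrow> i \<noteq> j \<Longrightarrow> lam i \<noteq> lam j"
    and "\<sigma> permutes {1..n}"
    and "\<sigma> \<noteq> id"
    and "\<And>i. i \<in> {1..n} \<Longrightarrow> (\<Sum>j=1..n. Mmat lam \<sigma> i j * v j) = 0"
  shows "\<exists>i\<in>{1..n}. \<exists>j\<in>{1..n}. i \<noteq> j \<and> v i = v j"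
proof -
  note perm = assms(3)
  define w where "w k = v k - v (inv \<sigma> k)" for k
  have weq: "(\<Sum>k\<in>{1..n}. lam k ^ i * w k) = 0" if i: "i \<in> {1..card {1..n}}" for i
  proof -
    have i': "i \<in> {1..n}" using i by simp
    have r: "(\<Sum>j=1..n. lam (\<sigma> j) ^ i * v j) = (\<Sum>k=1..n. lam k ^ i * v (inv \<sigma> k))"
    proof -
      have "(\<Sum>k=1..n. lam k ^ i * v (inv \<sigma> k)) = (\<Sum>k\<in>\<sigma> ` {1..n}. lam k ^ i * v (inv \<sigma> k))"
        using permutes_image[OF perm] by simp
      also have "\<dots> = (\<Sum>j=1..n. lam (\<sigma> j) ^ i * v (inv \<sigma> (\<sigma> j)))"
        by (subst sum.reindex) (use permutes_inj[OF perm] inj_on_subset in auto)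
      also have "\<dots> = (\<Sum>j=1..n. lam (\<sigma> j) ^ i * v j)"
        using permutes_inverses(2)[OF perm] by simp
      finally show ?thesis by simp
    qed
    have "0 = (\<Sum>j=1..n. Mmat lam \<sigma> i j * v j)" using assms(5)[OF i'] by simp
    also have "\<dots> = (\<Sum>j=1..n. lam j ^ i * v j) - (\<Sum>j=1..n. lam (\<sigma> j) ^ i * v j)"
      by (simp add: Mmat_def left_diff_distrib sum_subtractf)
    also have "\<dots> = (\<Sum>k=1..n. lam k ^ i * w k)"
      unfolding r w_def by (simp add: right_diff_distrib sum_subtractf)
    finally show ?thesis by simp
  qed
  have inj: "inj_on lam {1..n}" using assms(2) unfolding inj_on_def by blast
  have wz: "w k = 0" if "k \<in> {1..n}" "lam k \<noteq> 0" for k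
    using key[OF _ inj that weq] by simp
  obtain a where a: "\<sigma> a \<noteq> a" using assms(4) by (metis eq_id_iff)
  have aS: "a \<in> {1..n}" using a perm by (meson permutes_not_in)
  define b where "b = \<sigma> a"
  have bS: "b \<in> {1..n}" using permutes_in_image[OF perm] aS b_def by blast
  have ab: "a \<noteq> b" using a b_def by simp
  have ib: "inv \<sigma> b = a" using b_def permutes_inverses(2)[OF perm] by simp
  have ia: "inv \<sigma> a \<noteq> a"
    by (metis a permutes_inverses(1)[OF perm])
  have iaS: "inv \<sigma> a \<in> {1..n}" using aS perm
    by (metis permutes_in_image permutes_inv)
  show ?thesis
  proof (cases "lam a = 0")
    case True
    then have "lam b \<noteq> 0" using assms(2)[OF aS bS ab] by simp
    then have "w b = 0" using wz bS by simp
    then show ?thesis using ib ab aS bS unfolding w_def by force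
  next
    case False
    then have "w a = 0" using wz aS by simp
    then show ?thesis using ia aS iaS unfolding w_def by force
  qed
qed

end
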